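(* Let $f$ be a real valued function defined on a subset $D$ of $\mathbb{R}$ and let $x\in D$. The set of sequential cord derivatives of $f$ at $x$ is a closed subset of $\overline{\mathbb{R}}$.
   Context: $\overline{\mathbb{R}}=\mathbb{R}\cup\{\pm\infty\}$. $L\in\overline{\mathbb{R}}$ is a sequential cord derivative of $f$ at $x$ if there are sequences $h_n>0$, $k_n>0$ with $h_n\to0$, $k_n\to0$, $x+h_n\in D$, $x-k_n\in D$ for all $n$, and $\frac{f(x+h_n)-f(x-k_n)}{h_n+k_n}\to L$ as $n\to\infty$. A set $S\subseteq\overline{\mathbb{R}}$ is closed if every $L\in\overline{\mathbb{R}}$ for which there is a sequence of real numbers $L_n\in S\cap\mathbb{R}$ with $L_n\to L$ belongs to $S$. *)

theory Defs
  imports "HOL-Analysis.Analysis" "HOL-Library.Extended_Real"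
begin

definition seq_cord_deriv :: "(real \<Rightarrow> real) \<Rightarrow> real set \<Rightarrow> real \<Rightarrow> ereal \<Rightarrow> bool" where
  "seq_cord_deriv f D x L \<longleftrightarrow>
     (\<exists>h k :: nat \<Rightarrow> real.
        (\<forall>n. h n > 0 \<and> k n > 0 \<and> x + h n \<in> D \<and> x - k n \<in> D) \<and>
        h \<longlonglongrightarrow> 0 \<and> k \<longlonglongrightarrow> 0 \<and>
        ((\<lambda>n. ereal ((f (x + h n) - f (x - k n)) / (h n + k n))) \<longlonglongrightarrow> L))"

definition seq_cord_derivs :: "(real \<Rightarrow> real) \<Rightarrow> real set \<Rightarrow> real \<Rightarrow> ereal set" where
  "seq_cord_derivs f D x = {L. seq_cord_deriv f D x L}"

text \<open>Closedness in the extended reals as in the paper: limits of sequences of real members.\<close>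
definition ereal_seq_closed :: "ereal set \<Rightarrow> bool" where
  "ereal_seq_closed S \<longleftrightarrow>
     (\<forall>L (Ls :: nat \<Rightarrow> real). (\<forall>n. ereal (Ls n) \<in> S) \<and> ((\<lambda>n. ereal (Ls n)) \<longlonglongrightarrow> L) \<longrightarrow> L \<in> S)"

end

theory Submission
  imports Defs
begin

theorem theorem3p4:
  fixes f :: "real \<Rightarrow> real" and D :: "real set" and x :: real
  assumes "x \<in> D"
  shows "ereal_seq_closed (seq_cord_derivs f D x)"
  unfolding ereal_seq_closed_def
proof (intro allI impI, elim conjE)
  fix L :: ereal and Ls :: "nat \<Rightarrow> real"
  assume mem: "\<forall>n. ereal (Ls n) \<in> seq_cord_derivs f D x"
    and lim: "(\<lambda>n. ereal (Ls n)) \<longlonglongrightarrow> L"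
  obtain A :: "nat \<Rightarrow> ereal set" where Ao: "\<And>i. open (A i)" and AL: "\<And>i. L \<in> A i"
    and Alim: "\<And>F. (\<forall>n. F n \<in> A n) \<Longrightarrow> F \<longlonglongrightarrow> L"
    by (rule first_countable_topology_class.countable_basis[where x=L]) blast
  define Q where "Q = (\<lambda>a b. ereal ((f (x + a) - f (x - b)) / (a + b)))"
  have step: "\<exists>p. fst p > 0 \<and> snd p > 0 \<and> x + fst p \<in> D \<and> x - snd p \<in> D \<and>
      fst p < 1 / (real m + 1) \<and> snd p < 1 / (real m + 1) \<and> Q (fst p) (snd p) \<in> A m" for m
  proof -
    have "eventually (\<lambda>n. ereal (Ls n) \<in> A m) sequentially"
      using lim Ao AL by (simp add: tendsto_def)
    then obtain n where n: "ereal (Ls n) \<in> A m" by (auto simp: eventually_sequentially)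
    from mem[rule_format, of n] obtain h k where
      hk: "\<forall>i. h i > 0 \<and> k i > 0 \<and> x + h i \<in> D \<and> x - k i \<in> D"
      and h0: "h \<longlonglongrightarrow> 0" and k0: "k \<longlonglongrightarrow> 0"
      and ql: "(\<lambda>i. Q (h i) (k i)) \<longlonglongrightarrow> ereal (Ls n)"
      unfolding seq_cord_derivs_def seq_cord_deriv_def Q_def by blast
    have e: "1 / (real m + 1) > 0" by simp
    have "eventually (\<lambda>i. Q (h i) (k i) \<in> A m) sequentially"
      using ql Ao n by (simp add: tendsto_def)
    moreover have "eventually (\<lambda>i. dist (h i) 0 < 1 / (real m + 1)) sequentially"
      using h0 e by (rule tendstoD)
    moreover have "eventually (\<lambda>i. dist (k i) 0 < 1 / (real m + 1)) sequentially"
      using k0 e by (rule tendstoD)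
    ultimately have "eventually (\<lambda>i. Q (h i) (k i) \<in> A m \<and> dist (h i) 0 < 1 / (real m + 1)
       \<and> dist (k i) 0 < 1 / (real m + 1)) sequentially"
      by eventually_elim auto
    then obtain i where i: "Q (h i) (k i) \<in> A m" "dist (h i) 0 < 1 / (real m + 1)"
       "dist (k i) 0 < 1 / (real m + 1)"
      by (auto simp: eventually_sequentially)
    show ?thesis
      using hk[rule_format, of i] i
      by (intro exI[of _ "(h i, k i)"]) (auto simp: dist_real_def)
  qed
  then have "\<forall>m. \<exists>p. fst p > 0 \<and> snd p > 0 \<and> x + fst p \<in> D \<and> x - snd p \<in> D \<and>
      fst p < 1 / (real m + 1) \<and> snd p < 1 / (real m + 1) \<and> Q (fst p) (snd p) \<in> A m" by blast
  then have "\<exists>P. \<forall>m. fst (P m) > 0 \<and> snd (P m) > 0 \<and> x + fst (P m) \<in> D \<and> x - snd (P m) \<in> D \<and>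
      fst (P m) < 1 / (real m + 1) \<and> snd (P m) < 1 / (real m + 1) \<and> Q (fst (P m)) (snd (P m)) \<in> A m" by (rule choice)
  then obtain P where P: "\<forall>m. fst (P m) > 0 \<and> snd (P m) > 0 \<and> x + fst (P m) \<in> D \<and> x - snd (P m) \<in> D \<and>
      fst (P m) < 1 / (real m + 1) \<and> snd (P m) < 1 / (real m + 1) \<and> Q (fst (P m)) (snd (P m)) \<in> A m" by blast
  define H where "H = (\<lambda>m. fst (P m))"
  define K where "K = (\<lambda>m. snd (P m))"
  have z: "(\<lambda>m. 1 / (real m + 1)) \<longlonglongrightarrow> 0"
    using LIMSEQ_inverse_real_of_nat by (simp add: inverse_eq_divide add.commute)
  have H0: "H \<longlonglongrightarrow> 0"
    apply (rule tendsto_sandwich[of "\<lambda>_. 0" _ _ "\<lambda>m. 1 / (real m + 1)"])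
    using P z by (auto simp: H_def less_imp_le)
  have K0: "K \<longlonglongrightarrow> 0"
    apply (rule tendsto_sandwich[of "\<lambda>_. 0" _ _ "\<lambda>m. 1 / (real m + 1)"])
    using P z by (auto simp: K_def less_imp_le)
  have QL: "(\<lambda>m. Q (H m) (K m)) \<longlonglongrightarrow> L"
    using Alim P by (auto simp: H_def K_def)
  show "L \<in> seq_cord_derivs f D x"
    unfolding seq_cord_derivs_def seq_cord_deriv_def mem_Collect_eq
    apply (rule exI[of _ H], rule exI[of _ K])
    using P H0 K0 QL by (auto simp: H_def K_def Q_def)
qed

end
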